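(* Let $q$ be a prime power, $m\ge 1$, and let $1\le k\le n-1$ be integers. Let $\bar{\mathbb{F}}_{q^m}$ denote the algebraic closure of $\mathbb{F}_{q^m}$. Then the set $$S_{\mathrm{MRD}} := \{X \in \bar{\mathbb{F}}_{q^m}^{k\times (n-k)} \mid \det([\,I_k \mid X\,]\, A)\neq 0 \text{ for all } A \in \mathbb{F}_q^{n\times k} \text{ of rank } k\}$$ is a generic subset of $\bar{\mathbb{F}}_{q^m}^{k\times (n-k)}$.
   Context: We identify $\bar{\mathbb{F}}_{q^m}^{k\times(n-k)}$ with $\bar{\mathbb{F}}_{q}^{r}$, $r=k(n-k)$, by treating the entries of $X$ as coordinates $x_1,\dots,x_r$. The Zariski topology on $\bar{\mathbb{F}}_q^r$ is the topology whose closed sets are the algebraic sets $V(S)=\{\boldsymbol x\in\bar{\mathbb{F}}_q^r \mid f(\boldsymbol x)=0 \ \forall f\in S\}$ for subsets $S\subseteq \mathbb{F}_q[x_1,\dots,x_r]$; Zariski-open sets are their complements. A subset of $\bar{\mathbb{F}}_q^r$ is called generic if it contains a non-empty Zariski-open set. $I_k$ is the $k\times k$ identity matrix. *)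

theory Defs
  imports "HOL-Algebra.Algebraic_Closure_Type" "Jordan_Normal_Form.DL_Rank"
begin

definition is_subfield :: "'a::field set \<Rightarrow> bool" where
  "is_subfield F \<longleftrightarrow> 0 \<in> F \<and> 1 \<in> F \<and> (\<forall>x\<in>F. \<forall>y\<in>F. x + y \<in> F \<and> x * y \<in> F)
      \<and> (\<forall>x\<in>F. - x \<in> F) \<and> (\<forall>x\<in>F. x \<noteq> 0 \<longrightarrow> inverse x \<in> F)"

definition prime_power :: "nat \<Rightarrow> bool" where
  "prime_power q \<longleftrightarrow> (\<exists>p e. prime p \<and> e \<ge> 1 \<and> q = p ^ e)"

definition hconcat :: "'a mat \<Rightarrow> 'a mat \<Rightarrow> 'a mat" where
  "hconcat A B = mat (dim_row A) (dim_col A + dim_col B)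
     (\<lambda>(i, j). if j < dim_col A then A $$ (i, j) else B $$ (i, j - dim_col A))"

text \<open>Polynomial functions with coefficients in the subfield F (embedded into the
  algebraic closure) in the k*l coordinate variables M(i,j), i<k, j<l, of a k x l matrix
  over the algebraic closure.  These are exactly the evaluation maps of the polynomials
  in F[x_1,...,x_r], r = k*l.\<close>
inductive_set polyfun :: "'f::field set \<Rightarrow> nat \<Rightarrow> nat \<Rightarrow> ('f alg_closure mat \<Rightarrow> 'f alg_closure) set"
  for F :: "'f set" and k l :: nat where
  const: "c \<in> F \<Longrightarrow> (\<lambda>M. to_ac c) \<in> polyfun F k l"
| var: "i < k \<Longrightarrow> j < l \<Longrightarrow> (\<lambda>M. M $$ (i, j)) \<in> polyfun F k l"
| add: "f \<in> polyfun F k l \<Longrightarrow> g \<in> polyfun F k l \<Longrightarrow> (\<lambda>M. f M + g M) \<in> polyfun F k l"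
| mult: "f \<in> polyfun F k l \<Longrightarrow> g \<in> polyfun F k l \<Longrightarrow> (\<lambda>M. f M * g M) \<in> polyfun F k l"

definition zariski_open :: "'f::field set \<Rightarrow> nat \<Rightarrow> nat \<Rightarrow> 'f alg_closure mat set \<Rightarrow> bool" where
  "zariski_open F k l U \<longleftrightarrow> (\<exists>S. S \<subseteq> polyfun F k l \<and>
      U = carrier_mat k l - {M \<in> carrier_mat k l. \<forall>f\<in>S. f M = 0})"

definition generic :: "'f::field set \<Rightarrow> nat \<Rightarrow> nat \<Rightarrow> 'f alg_closure mat set \<Rightarrow> bool" where
  "generic F k l T \<longleftrightarrow> (\<exists>U. zariski_open F k l U \<and> U \<noteq> {} \<and> U \<subseteq> T)"

text \<open>The set S_MRD; Fq is the subfield F_q of the field F_{q^m} (the type 'f),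
  and the algebraic closure of F_{q^m} is the type 'f alg_closure.\<close>
definition S_MRD :: "'f::field set \<Rightarrow> nat \<Rightarrow> nat \<Rightarrow> 'f alg_closure mat set" where
  "S_MRD Fq n k = {M \<in> carrier_mat k (n - k).
     \<forall>A \<in> carrier_mat n k. (\<forall>i<n. \<forall>j<k. A $$ (i, j) \<in> Fq) \<longrightarrow> vec_space.rank n A = k \<longrightarrow>
        det (hconcat (1\<^sub>m k) M * map_mat to_ac A) \<noteq> 0}"

end

theory Submission
  imports Defs "Jordan_Normal_Form.Char_Poly"
begin


lemma infinite_field_ac: "infinite (UNIV :: 'a::field alg_closure set)"
proof
  assume fin: "finite (UNIV :: 'a alg_closure set)"
  define p :: "'a alg_closure poly" where "p = (\<Prod>a\<in>UNIV. [:-a, 1:]) + 1"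
  have "degree (\<Prod>a\<in>(UNIV::'a alg_closure set). [:-a, 1:]) = card (UNIV :: 'a alg_closure set)"
    by (simp add: degree_prod_eq_sum_degree)
  moreover have "card (UNIV :: 'a alg_closure set) > 0" using fin by (simp add: finite_UNIV_card_ge_0)
  ultimately have "degree p > 0" unfolding p_def
    by (metis degree_add_eq_left degree_1)
  then obtain x where "poly p x = 0" using alg_closed_imp_poly_has_root by blast
  moreover have "poly (\<Prod>a\<in>(UNIV::'a alg_closure set). [:-a, 1:]) x = 0"
    by (simp add: poly_prod fin)
  ultimately show False unfolding p_def by simp
qed

inductive_set pf :: "nat \<Rightarrow> ((nat \<Rightarrow> 'a::comm_ring_1) \<Rightarrow> 'a) set" for r where
  const: "(\<lambda>x. c) \<in> pf r"
| var: "i < r \<Longrightarrow> (\<lambda>x. x i) \<in> pf r"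
| add: "f \<in> pf r \<Longrightarrow> g \<in> pf r \<Longrightarrow> (\<lambda>x. f x + g x) \<in> pf r"
| mult: "f \<in> pf r \<Longrightarrow> g \<in> pf r \<Longrightarrow> (\<lambda>x. f x * g x) \<in> pf r"

lemma pf_dep: "f \<in> pf r \<Longrightarrow> (\<And>i. i < r \<Longrightarrow> x i = y i) \<Longrightarrow> f x = f y"
  by (induction rule: pf.induct) auto

lemma pf_sum: "finite S \<Longrightarrow> (\<And>s. s \<in> S \<Longrightarrow> g s \<in> pf r) \<Longrightarrow> (\<lambda>x. \<Sum>s\<in>S. g s x) \<in> pf r"
proof (induction S rule: finite_induct)
  case empty then show ?case using pf.const[of 0] by simp
next
  case (insert a F) then show ?case using pf.add[of "g a" r "\<lambda>x. \<Sum>s\<in>F. g s x"] by simp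
qed

lemma pf_decomp:
  assumes "f \<in> pf (Suc r)"
  shows "\<exists>P. (\<forall>x. f x = poly (P x) (x r)) \<and> (\<forall>i. (\<lambda>x. coeff (P x) i) \<in> pf r)"
  using assms
proof (induction rule: pf.induct)
  case (const c)
  show ?case
  proof (rule exI[of _ "\<lambda>x. [:c:]"], intro conjI allI)
    fix i show "(\<lambda>x. coeff [:c:] i) \<in> pf r"
      using pf.const[of c r] pf.const[of 0 r] by (cases i) auto
  qed auto
next
  case (var i)
  show ?case
  proof (cases "i = r")
    case True
    show ?thesis
      apply (rule exI[of _ "\<lambda>x. [:0,1:]"])
      using True pf.const[of "coeff [:0,1:] _" r] by auto
  next
    case False
    hence ir: "i < r" using var by auto
    show ?thesis
    proof (rule exI[of _ "\<lambda>x. [:x i:]"], intro conjI allI)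
      fix j show "(\<lambda>x. coeff [:x i:] j) \<in> pf r"
        using pf.var[OF ir] pf.const[of 0 r] by (cases j) auto
    qed auto
  qed
next
  case (add f g)
  then obtain P Q where P: "\<forall>x. f x = poly (P x) (x r)" "\<forall>i. (\<lambda>x. coeff (P x) i) \<in> pf r"
    and Q: "\<forall>x. g x = poly (Q x) (x r)" "\<forall>i. (\<lambda>x. coeff (Q x) i) \<in> pf r" by blast
  show ?case
    apply (rule exI[of _ "\<lambda>x. P x + Q x"])
    using P Q by (auto simp: poly_add intro: pf.add)
next
  case (mult f g)
  then obtain P Q where P: "\<forall>x. f x = poly (P x) (x r)" "\<forall>i. (\<lambda>x. coeff (P x) i) \<in> pf r"
    and Q: "\<forall>x. g x = poly (Q x) (x r)" "\<forall>i. (\<lambda>x. coeff (Q x) i) \<in> pf r" by blast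
  show ?case
  proof (rule exI[of _ "\<lambda>x. P x * Q x"], intro conjI allI)
    fix i
    show "(\<lambda>x. coeff (P x * Q x) i) \<in> pf r"
      unfolding coeff_mult
      by (rule pf_sum) (auto intro!: pf.mult simp: P Q)
  qed (auto simp: P Q poly_mult)
qed

lemma pf_SZ:
  assumes inf: "infinite (UNIV :: 'a::idom set)"
  shows "finite F \<Longrightarrow> F \<subseteq> pf r \<Longrightarrow> (\<forall>f\<in>F. \<exists>x. f x \<noteq> (0::'a)) \<Longrightarrow> \<exists>x. \<forall>f\<in>F. f x \<noteq> 0"
proof (induction r arbitrary: F)
  case 0
  show ?case
  proof (rule exI[of _ "\<lambda>_. 0"], intro ballI)
    fix f assume f: "f \<in> F"
    then obtain x where "f x \<noteq> 0" using 0 by blast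
    moreover have "f x = f (\<lambda>_. 0)" using pf_dep[of f 0] f 0 by auto
    ultimately show "f (\<lambda>_. 0) \<noteq> 0" by simp
  qed
next
  case (Suc r)
  have "\<forall>f\<in>F. \<exists>P. (\<forall>x. f x = poly (P x) (x r)) \<and> (\<forall>i. (\<lambda>x. coeff (P x) i) \<in> pf r)"
    using pf_decomp Suc.prems by blast
  then obtain P where P: "\<And>f x. f \<in> F \<Longrightarrow> f x = poly (P f x) (x r)"
    "\<And>f i. f \<in> F \<Longrightarrow> (\<lambda>x. coeff (P f x) i) \<in> pf r" by metis
  obtain a where a: "\<And>f. f \<in> F \<Longrightarrow> f (a f) \<noteq> 0" using Suc.prems by metis
  have "\<forall>f\<in>F. \<exists>i. coeff (P f (a f)) i \<noteq> 0"
  proof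
    fix f assume f: "f \<in> F"
    have "P f (a f) \<noteq> 0" using a[OF f] P(1)[OF f, of "a f"] by auto
    thus "\<exists>i. coeff (P f (a f)) i \<noteq> 0" using leading_coeff_neq_0 by blast
  qed
  then obtain ix where ix: "\<And>f. f \<in> F \<Longrightarrow> coeff (P f (a f)) (ix f) \<noteq> 0" by metis
  define G where "G = (\<lambda>f. \<lambda>x. coeff (P f x) (ix f)) ` F"
  have "\<exists>x. \<forall>g\<in>G. g x \<noteq> 0"
    apply (rule Suc.IH)
    using Suc.prems P(2) ix unfolding G_def by blast+
  then obtain x0 where x0: "\<And>f. f \<in> F \<Longrightarrow> coeff (P f x0) (ix f) \<noteq> 0" unfolding G_def by auto
  hence nz: "\<And>f. f \<in> F \<Longrightarrow> P f x0 \<noteq> 0" by (metis coeff_0)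
  define R where "R = (\<Union>f\<in>F. {t. poly (P f x0) t = 0})"
  have "finite R" unfolding R_def using Suc.prems(1) nz poly_roots_finite by blast
  then obtain c where c: "c \<notin> R" using inf by (meson ex_new_if_finite)
  define x1 where "x1 = x0(r := c)"
  have eq: "P f x1 = P f x0" if f: "f \<in> F" for f
  proof (rule poly_eqI)
    fix i show "coeff (P f x1) i = coeff (P f x0) i"
      by (rule pf_dep[OF P(2)[OF f]]) (auto simp: x1_def)
  qed
  show ?case
  proof (rule exI[of _ x1], intro ballI)
    fix f assume f: "f \<in> F"
    have "f x1 = poly (P f x0) c" using P(1)[OF f, of x1] eq[OF f] by (simp add: x1_def)
    thus "f x1 \<noteq> 0" using c f unfolding R_def by auto
  qed
qed



definition rclosed :: "('b \<Rightarrow> 'a::comm_ring_1) set \<Rightarrow> bool" where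
  "rclosed C \<longleftrightarrow> (\<lambda>_. 0) \<in> C \<and> (\<lambda>_. 1) \<in> C \<and> (\<lambda>_. -1) \<in> C \<and>
     (\<forall>f\<in>C. \<forall>g\<in>C. (\<lambda>x. f x + g x) \<in> C \<and> (\<lambda>x. f x * g x) \<in> C)"

lemma rclosed_sum: assumes C: "rclosed C" shows "finite S \<Longrightarrow> (\<And>s. s \<in> S \<Longrightarrow> g s \<in> C) \<Longrightarrow> (\<lambda>x. \<Sum>s\<in>S. g s x) \<in> C"
proof (induction S rule: finite_induct)
  case empty then show ?case using C by (simp add: rclosed_def)
next
  case (insert a F) then show ?case using C by (simp add: rclosed_def)
qed

lemma rclosed_prod: assumes C: "rclosed C" shows "finite S \<Longrightarrow> (\<And>s. s \<in> S \<Longrightarrow> g s \<in> C) \<Longrightarrow> (\<lambda>x. \<Prod>s\<in>S. g s x) \<in> C"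
proof (induction S rule: finite_induct)
  case empty then show ?case using C by (simp add: rclosed_def)
next
  case (insert a F) then show ?case using C by (simp add: rclosed_def)
qed

lemma rclosed_det:
  fixes C :: "('b \<Rightarrow> 'a::comm_ring_1) set"
  assumes C: "rclosed C" and e: "\<And>i j. i < d \<Longrightarrow> j < d \<Longrightarrow> (\<lambda>x. e x i j) \<in> C"
  shows "(\<lambda>x. det (mat d d (\<lambda>(i,j). e x i j))) \<in> C"
proof -
  have "(\<lambda>x. det (mat d d (\<lambda>(i,j). e x i j))) =
    (\<lambda>x. \<Sum>p\<in>{p. p permutes {0..<d}}. signof p * (\<Prod>i\<in>{0..<d}. e x i (p i)))"
    unfolding det_def by (auto intro!: sum.cong prod.cong)
  also have "\<dots> \<in> C"
  proof (rule rclosed_sum[OF C])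
    show "finite {p. p permutes {0..<d}}" by (simp add: finite_permutations)
    fix p assume p: "p \<in> {p. p permutes {0..<d}}"
    have s: "(\<lambda>x. signof p :: 'a) \<in> C" using C by (cases p rule: sign_cases) (auto simp: rclosed_def)
    have pr: "(\<lambda>x. \<Prod>i\<in>{0..<d}. e x i (p i)) \<in> C"
      apply (rule rclosed_prod[OF C]) using p e permutes_in_image[of p "{0..<d}"] by auto
    have mult: "\<And>f g. f \<in> C \<Longrightarrow> g \<in> C \<Longrightarrow> (\<lambda>x. f x * g x) \<in> C"
      using C unfolding rclosed_def by blast
    show "(\<lambda>x. signof p * (\<Prod>i\<in>{0..<d}. e x i (p i))) \<in> C"
      by (rule mult[OF s pr])
  qed
  finally show ?thesis .
qed

lemma rclosed_pf: "rclosed (pf r)"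
  unfolding rclosed_def by (auto intro: pf.intros)

lemma rclosed_polyfun: assumes "is_subfield F" shows "rclosed (polyfun F k l)"
proof -
  have F: "0 \<in> F" "1 \<in> F" "-1 \<in> F" using assms unfolding is_subfield_def by auto
  have "(\<lambda>M. to_ac 0) \<in> polyfun F k l" "(\<lambda>M. to_ac 1) \<in> polyfun F k l" "(\<lambda>M. to_ac (-1)) \<in> polyfun F k l"
    using polyfun.const[OF F(1)] polyfun.const[OF F(2)] polyfun.const[OF F(3)] by auto
  then show ?thesis unfolding rclosed_def by (auto intro: polyfun.intros)
qed



lemma (in vec_space) rank_inj:
  assumes A: "A \<in> carrier_mat n k" and r: "rank A = k"
    and v: "v \<in> carrier_vec k" "A *\<^sub>v v = 0\<^sub>v n"
  shows "v = 0\<^sub>v k"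
proof (rule ccontr)
  assume nz: "v \<noteq> 0\<^sub>v k"
  show False
  proof (cases "distinct (cols A)")
    case True
    have "lin_indpt (set (cols A))" using full_rank_lin_indpt[OF A r True] .
    moreover have "lin_dep (set (cols A))" using lin_depI[OF A v(1) nz v(2) True] .
    ultimately show False by simp
  next
    case False
    obtain S where S: "maximal S (\<lambda>T. T \<subseteq> set (cols A) \<and> lin_indpt T)"
      using maximal_exists[of "(\<lambda>T. T \<subseteq> set (cols A) \<and> lin_indpt T)" "card (set (cols A))" "{}"]
      by (meson List.finite_set card_mono empty_iff empty_subsetI finite_lin_indpt2 rev_finite_subset)
    then have "card S \<le> card (set (cols A))" by (simp add: card_mono maximal_def)
    also have "\<dots> < length (cols A)" using False card_length card_distinct le_neq_implies_less by blast
    also have "\<dots> = k" using A by simp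
    finally show False using rank_card_indpt[OF A S] r by simp
  qed
qed

lemma left_inv:
  fixes A :: "'a::field mat"
  assumes A: "A \<in> carrier_mat n k" and kn: "k \<le> n"
    and inj: "\<And>v. v \<in> carrier_vec k \<Longrightarrow> A *\<^sub>v v = 0\<^sub>v n \<Longrightarrow> v = 0\<^sub>v k"
  shows "\<exists>D \<in> carrier_mat k n. D * A = 1\<^sub>m k"
proof -
  define C where "C = gauss_jordan_single A"
  note g = gauss_jordan_single[OF A C_def[symmetric]]
  from g(4) obtain P where CPA: "C = P * A" and P: "P \<in> carrier_mat n n" by auto
  have Cc: "C \<in> carrier_mat n k" by (rule g(2))
  have injC: "\<And>v. v \<in> carrier_vec k \<Longrightarrow> C *\<^sub>v v = 0\<^sub>v n \<Longrightarrow> v = 0\<^sub>v k" using g(1) inj by blast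
  from g(3) obtain f where piv: "pivot_fun C f k" unfolding row_echelon_form_def using Cc by auto
  have dC: "dim_row C = n" using Cc by simp
  note pd = pivot_funD[OF dC piv]
  define Ct where "Ct = mat k k (\<lambda>(i,j). C $$ (i,j))"
  have Ct: "Ct \<in> carrier_mat k k" unfolding Ct_def by simp
  have dCt: "dim_row Ct = k" using Ct by simp
  have pivt: "pivot_fun Ct f k"
  proof (rule pivot_funI[OF dCt])
    fix i assume i: "i < k"
    hence i': "i < n" using kn by simp
    show "f i \<le> k" using pd(1)[OF i'] .
    show "\<And>j. j < f i \<Longrightarrow> Ct $$ (i, j) = 0" using pd(2)[OF i'] pd(1)[OF i'] i unfolding Ct_def by auto
    show "Suc i < k \<Longrightarrow> f i < f (Suc i) \<or> f (Suc i) = k" using pd(3)[OF i'] kn by simp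
    show "f i < k \<Longrightarrow> Ct $$ (i, f i) = 1" using pd(4)[OF i'] i unfolding Ct_def by auto
    show "\<And>i'. f i < k \<Longrightarrow> i' < k \<Longrightarrow> i' \<noteq> i \<Longrightarrow> Ct $$ (i', f i) = 0"
      using pd(5)[OF i'] i kn unfolding Ct_def by auto
  qed
  have reft: "row_echelon_form Ct" unfolding row_echelon_form_def using pivt Ct by auto
  have Ct1: "Ct = 1\<^sub>m k"
  proof (rule ccontr)
    assume ne: "Ct \<noteq> 1\<^sub>m k"
    from row_echelon_form_imp_1_or_0_row[OF Ct reft] ne
    have k0: "k > 0" and rz: "row Ct (k - 1) = 0\<^sub>v k" by auto
    have fk: "f (k - 1) = k" using pivot_fun_zero_row_iff[OF pivt Ct, of "k - 1"] rz k0 by simp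
    have zr: "C $$ (i, j) = 0" if ij: "k - 1 \<le> i" "i < n" "j < k" for i j
    proof -
      have "f (k - 1 + (i - (k - 1))) = k \<or> f (k - 1 + (i - (k - 1))) \<ge> (i - (k - 1)) + f (k - 1)"
        by (rule pivot_bound[OF dC piv]) (use ij in auto)
      hence "f i = k \<or> f i \<ge> k" using ij fk k0 by (simp, linarith)
      hence "f i = k" using pd(1)[OF ij(2)] by auto
      thus ?thesis using pd(2)[OF ij(2)] ij(3) by auto
    qed
    note fb = find_base_vector_not_1[OF reft Ct ne]
    define v where "v = find_base_vector Ct"
    have v: "v \<in> carrier_vec k" "v \<noteq> 0\<^sub>v k" "Ct *\<^sub>v v = 0\<^sub>v k" using fb unfolding v_def by auto
    have "C *\<^sub>v v = 0\<^sub>v n"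
    proof (rule eq_vecI)
      fix i assume "i < dim_vec (0\<^sub>v n :: 'a vec)"
      hence i: "i < n" by simp
      show "(C *\<^sub>v v) $ i = 0\<^sub>v n $ i"
      proof (cases "i < k")
        case True
        have "row C i = row Ct i" using True Cc kn unfolding Ct_def by (auto simp: row_def)
        hence "(C *\<^sub>v v) $ i = (Ct *\<^sub>v v) $ i" using True i Cc Ct by simp
        thus ?thesis using v(3) True i by simp
      next
        case False
        have "row C i = 0\<^sub>v k" using zr[of i] False i Cc by (intro eq_vecI) auto
        thus ?thesis using i Cc v(1) by simp
      qed
    qed (use Cc in simp)
    thus False using injC v by blast
  qed
  define D where "D = mat k n (\<lambda>(i,j). P $$ (i,j))"
  have D: "D \<in> carrier_mat k n" unfolding D_def by simp
  have "D * A = 1\<^sub>m k"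
  proof (rule eq_matI)
    fix i j assume ij: "i < dim_row (1\<^sub>m k :: 'a mat)" "j < dim_col (1\<^sub>m k :: 'a mat)"
    hence i: "i < k" and j: "j < k" by auto
    have "row D i = row P i" using i kn P unfolding D_def by (auto simp: row_def)
    hence "(D * A) $$ (i, j) = (P * A) $$ (i, j)" using i j kn P A D by simp
    also have "\<dots> = Ct $$ (i,j)" using i j unfolding CPA[symmetric] Ct_def by simp
    finally show "(D * A) $$ (i, j) = 1\<^sub>m k $$ (i, j)" using Ct1 by simp
  qed (use D A in auto)
  thus ?thesis using D by blast
qed



interpretation to_ac_hom: comm_ring_hom to_ac
  by unfold_locales simp_all

lemma hconcat_carrier[simp]: "B \<in> carrier_mat k a \<Longrightarrow> Cm \<in> carrier_mat k b \<Longrightarrow> hconcat B Cm \<in> carrier_mat k (a + b)"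
  unfolding hconcat_def by auto

lemma hconcat_mult:
  assumes B: "B \<in> carrier_mat k a" and Cm: "Cm \<in> carrier_mat k b" and A: "A \<in> carrier_mat (a + b) c"
  shows "hconcat B Cm * A = B * mat a c (\<lambda>(i,j). A $$ (i,j)) + Cm * mat b c (\<lambda>(i,j). A $$ (i + a, j))"
proof (rule eq_matI)
  fix i j assume ij: "i < dim_row (B * mat a c (\<lambda>(i,j). A $$ (i,j)) + Cm * mat b c (\<lambda>(i,j). A $$ (i + a, j)))"
    "j < dim_col (B * mat a c (\<lambda>(i,j). A $$ (i,j)) + Cm * mat b c (\<lambda>(i,j). A $$ (i + a, j)))"
  hence i: "i < k" and j: "j < c" using B Cm by auto
  have "(hconcat B Cm * A) $$ (i,j) = (\<Sum>l\<in>{0..<a+b}. hconcat B Cm $$ (i,l) * A $$ (l,j))"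
  proof -
    have H: "hconcat B Cm \<in> carrier_mat k (a+b)" using B Cm by simp
    have "(hconcat B Cm * A) $$ (i,j) = row (hconcat B Cm) i \<bullet> col A j"
      using i j H A by (intro index_mult_mat) auto
    also have "\<dots> = (\<Sum>l\<in>{0..<a+b}. hconcat B Cm $$ (i,l) * A $$ (l,j))"
      using i j H A unfolding scalar_prod_def by (intro sum.cong) auto
    finally show ?thesis .
  qed
  also have "\<dots> = (\<Sum>l\<in>{0..<a}. hconcat B Cm $$ (i,l) * A $$ (l,j)) + (\<Sum>l\<in>{a..<a+b}. hconcat B Cm $$ (i,l) * A $$ (l,j))"
    by (simp add: sum.atLeastLessThan_concat)
  also have "(\<Sum>l\<in>{a..<a+b}. hconcat B Cm $$ (i,l) * A $$ (l,j)) = (\<Sum>l\<in>{0..<b}. hconcat B Cm $$ (i,l+a) * A $$ (l+a,j))"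
    using sum.shift_bounds_nat_ivl[of "\<lambda>l. hconcat B Cm $$ (i,l) * A $$ (l,j)" 0 a b] by (simp add: add.commute)
  also have "(\<Sum>l\<in>{0..<a}. hconcat B Cm $$ (i,l) * A $$ (l,j)) = (\<Sum>l\<in>{0..<a}. B $$ (i,l) * A $$ (l,j))"
    using i B Cm by (intro sum.cong) (auto simp: hconcat_def)
  also have "(\<Sum>l\<in>{0..<b}. hconcat B Cm $$ (i,l+a) * A $$ (l+a,j)) = (\<Sum>l\<in>{0..<b}. Cm $$ (i,l) * A $$ (l+a,j))"
    using i B Cm by (intro sum.cong) (auto simp: hconcat_def)
  finally show "(hconcat B Cm * A) $$ (i,j) = (B * mat a c (\<lambda>(i,j). A $$ (i,j)) + Cm * mat b c (\<lambda>(i,j). A $$ (i + a, j))) $$ (i,j)"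
    using i j B Cm by (simp add: scalar_prod_def)
qed (use B Cm A in \<open>auto simp: hconcat_def\<close>)

lemma mult_hconcat:
  assumes Y: "Y \<in> carrier_mat r k" and B: "B \<in> carrier_mat k a" and Cm: "Cm \<in> carrier_mat k b"
  shows "Y * hconcat B Cm = hconcat (Y * B) (Y * Cm)"
proof (rule eq_matI)
  fix i j assume ij: "i < dim_row (hconcat (Y * B) (Y * Cm))" "j < dim_col (hconcat (Y * B) (Y * Cm))"
  hence i: "i < r" and j: "j < a + b" using Y B Cm by (auto simp: hconcat_def)
  have "col (hconcat B Cm) j = (if j < a then col B j else col Cm (j - a))"
    using j B Cm by (intro eq_vecI) (auto simp: hconcat_def)
  thus "(Y * hconcat B Cm) $$ (i,j) = hconcat (Y * B) (Y * Cm) $$ (i,j)"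
    using i j Y B Cm by (auto simp: hconcat_def)
qed (use Y B Cm in \<open>auto simp: hconcat_def\<close>)



lemma exists_s:
  fixes D1 A1 :: "'f::field alg_closure mat"
  assumes D1: "D1 \<in> carrier_mat k k" and A1: "A1 \<in> carrier_mat k k"
  shows "\<exists>s. det (mat k k (\<lambda>(i,j). D1 $$ (i,j) + (if i = j then s else 0))) \<noteq> 0
           \<and> det (mat k k (\<lambda>(i,j). (if i = j then 1 else 0) + s * A1 $$ (i,j))) \<noteq> 0"
proof -
  define \<phi>1 :: "(nat \<Rightarrow> 'f alg_closure) \<Rightarrow> 'f alg_closure" where
    "\<phi>1 = (\<lambda>x. det (mat k k (\<lambda>(i,j). D1 $$ (i,j) + (if i = j then x 0 else 0))))"
  define \<phi>2 :: "(nat \<Rightarrow> 'f alg_closure) \<Rightarrow> 'f alg_closure" where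
    "\<phi>2 = (\<lambda>x. det (mat k k (\<lambda>(i,j). (if i = j then 1 else 0) + x 0 * A1 $$ (i,j))))"
  have v: "(\<lambda>x. x 0) \<in> pf 1" by (rule pf.var) simp
  have m1: "\<phi>1 \<in> pf 1" unfolding \<phi>1_def
  proof (rule rclosed_det[OF rclosed_pf, of k "\<lambda>x i j. D1 $$ (i,j) + (if i = j then x 0 else 0)"])
    fix i j show "(\<lambda>x. D1 $$ (i, j) + (if i = j then x 0 else 0)) \<in> pf 1"
      by (cases "i = j") (auto intro!: pf.intros v)
  qed
  have m2: "\<phi>2 \<in> pf 1" unfolding \<phi>2_def
  proof (rule rclosed_det[OF rclosed_pf, of k "\<lambda>x i j. (if i = j then 1 else 0) + x 0 * A1 $$ (i,j)"])
    fix i j show "(\<lambda>x. (if i = j then 1 else 0) + x 0 * A1 $$ (i,j)) \<in> pf 1"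
      by (auto intro!: pf.intros v)
  qed
  have "mat k k (\<lambda>(i,j). (if i = j then 1 else 0) + (0::'f alg_closure) * A1 $$ (i,j)) = 1\<^sub>m k"
    by (rule eq_matI) auto
  hence n2: "\<phi>2 (\<lambda>_. 0) \<noteq> 0" unfolding \<phi>2_def by simp
  define cp where "cp = char_poly (- D1)"
  have mD1: "- D1 \<in> carrier_mat k k" using D1 by simp
  have "coeff cp k = 1" unfolding cp_def using degree_monic_char_poly[OF mD1] by simp
  hence "cp \<noteq> 0" by auto
  hence "finite {t. poly cp t = 0}" by (rule poly_roots_finite)
  then obtain t where t: "poly cp t \<noteq> 0" using infinite_field_ac ex_new_if_finite by blast
  have "poly cp t = det (- (char_matrix (- D1) t))" unfolding cp_def by (rule char_poly_matrix[OF mD1])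
  also have "- (char_matrix (- D1) t) = mat k k (\<lambda>(i,j). D1 $$ (i,j) + (if i = j then t else 0))"
    using D1 by (intro eq_matI) (auto simp: char_matrix_def)
  finally have n1: "\<phi>1 (\<lambda>_. t) \<noteq> 0" using t unfolding \<phi>1_def by simp
  have "\<exists>x. \<forall>f\<in>{\<phi>1, \<phi>2}. f x \<noteq> 0"
  proof (rule pf_SZ[OF infinite_field_ac])
    show "finite {\<phi>1, \<phi>2}" by simp
    show "{\<phi>1, \<phi>2} \<subseteq> pf 1" using m1 m2 by simp
    show "\<forall>f\<in>{\<phi>1, \<phi>2}. \<exists>x. f x \<noteq> 0" using n1 n2 by blast
  qed
  then obtain x where "\<phi>1 x \<noteq> 0" "\<phi>2 x \<noteq> 0" by auto
  hence "det (mat k k (\<lambda>(i,j). D1 $$ (i,j) + (if i = j then x 0 else 0))) \<noteq> 0"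
    "det (mat k k (\<lambda>(i,j). (if i = j then 1 else 0) + x 0 * A1 $$ (i,j))) \<noteq> 0"
    unfolding \<phi>1_def \<phi>2_def by simp_all
  thus ?thesis by (intro exI[of _ "x 0"]) simp
qed

lemma exists_good_M:
  fixes A :: "'f::field mat"
  assumes A: "A \<in> carrier_mat n k" and kn: "k \<le> n"
    and inj: "\<And>v. v \<in> carrier_vec k \<Longrightarrow> A *\<^sub>v v = 0\<^sub>v n \<Longrightarrow> v = 0\<^sub>v k"
  shows "\<exists>M \<in> carrier_mat k (n - k). det (hconcat (1\<^sub>m k) M * map_mat to_ac A) \<noteq> 0"
proof -
  obtain D0 where D0: "D0 \<in> carrier_mat k n" and DA: "D0 * A = 1\<^sub>m k" using left_inv[OF A kn inj] by blast
  define D where "D = map_mat to_ac D0"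
  define A' where "A' = map_mat to_ac A"
  have D: "D \<in> carrier_mat k n" and A': "A' \<in> carrier_mat n k" using D0 A unfolding D_def A'_def by auto
  have DA': "D * A' = 1\<^sub>m k" unfolding D_def A'_def
    using to_ac_hom.mat_hom_mult[OF D0 A, symmetric] DA by (simp add: to_ac_hom.mat_hom_one)
  have nk: "n = k + (n - k)" using kn by simp
  define D1 where "D1 = mat k k (\<lambda>(i,j). D $$ (i,j))"
  define D2 where "D2 = mat k (n - k) (\<lambda>(i,j). D $$ (i,j + k))"
  define A1 where "A1 = mat k k (\<lambda>(i,j). A' $$ (i,j))"
  define A2 where "A2 = mat (n - k) k (\<lambda>(i,j). A' $$ (i + k,j))"
  have D1: "D1 \<in> carrier_mat k k" and D2: "D2 \<in> carrier_mat k (n - k)"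
    and A1: "A1 \<in> carrier_mat k k" and A2: "A2 \<in> carrier_mat (n - k) k"
    unfolding D1_def D2_def A1_def A2_def by auto
  have A'': "A' \<in> carrier_mat (k + (n - k)) k" using A' nk by simp
  have split: "\<And>B. B \<in> carrier_mat k k \<Longrightarrow> hconcat B D2 * A' = B * A1 + D2 * A2"
    unfolding A1_def A2_def by (rule hconcat_mult[OF _ D2 A''])
  have hD: "hconcat D1 D2 = D"
    using D kn unfolding D1_def D2_def hconcat_def by (intro eq_matI) auto
  have one: "D1 * A1 + D2 * A2 = 1\<^sub>m k" using split[OF D1] hD DA' by simp
  obtain s where s1: "det (mat k k (\<lambda>(i,j). D1 $$ (i,j) + (if i = j then s else 0))) \<noteq> 0"
    and s2: "det (mat k k (\<lambda>(i,j). (if i = j then 1 else 0) + s * A1 $$ (i,j))) \<noteq> 0"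
    using exists_s[OF D1 A1] by blast
  define B where "B = D1 + s \<cdot>\<^sub>m 1\<^sub>m k"
  have B: "B \<in> carrier_mat k k" unfolding B_def using D1 by simp
  have "B = mat k k (\<lambda>(i,j). D1 $$ (i,j) + (if i = j then s else 0))"
    unfolding B_def using D1 by (intro eq_matI) auto
  hence dB: "det B \<noteq> 0" using s1 by simp
  have "1\<^sub>m k + s \<cdot>\<^sub>m A1 = mat k k (\<lambda>(i,j). (if i = j then 1 else 0) + s * A1 $$ (i,j))"
    using A1 by (intro eq_matI) auto
  hence dE: "det (1\<^sub>m k + s \<cdot>\<^sub>m A1) \<noteq> 0" using s2 by simp
  from det_non_zero_imp_unit[OF B dB, unfolded Units_def ring_mat_def]
  obtain Y where Y: "Y \<in> carrier_mat k k" and YB: "Y * B = 1\<^sub>m k" and BY: "B * Y = 1\<^sub>m k" by auto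
  define M where "M = Y * D2"
  have M: "M \<in> carrier_mat k (n - k)" unfolding M_def using Y D2 by simp
  have "hconcat (1\<^sub>m k) M = Y * hconcat B D2"
    unfolding M_def using mult_hconcat[OF Y B D2] YB by simp
  hence "hconcat (1\<^sub>m k) M * A' = Y * (hconcat B D2 * A')"
    using Y B D2 A'' by (simp add: assoc_mult_mat[of Y k k "hconcat B D2" "k + (n - k)" A' k])
  also have "hconcat B D2 * A' = B * A1 + D2 * A2" using split[OF B] .
  also have "B * A1 = D1 * A1 + s \<cdot>\<^sub>m A1"
    unfolding B_def using D1 A1 by (simp add: add_mult_distrib_mat[of D1 k k _ A1 k] mult_smult_assoc_mat[of "1\<^sub>m k" k k A1 k])
  also have "D1 * A1 + s \<cdot>\<^sub>m A1 + D2 * A2 = (D1 * A1 + D2 * A2) + s \<cdot>\<^sub>m A1"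
  proof -
    have c: "D1 * A1 \<in> carrier_mat k k" "s \<cdot>\<^sub>m A1 \<in> carrier_mat k k" "D2 * A2 \<in> carrier_mat k k"
      using D1 A1 D2 A2 by auto
    show ?thesis
      by (simp add: assoc_add_mat[OF c] assoc_add_mat[OF c(1) c(3) c(2)] comm_add_mat[OF c(2) c(3)])
  qed
  also have "\<dots> = 1\<^sub>m k + s \<cdot>\<^sub>m A1" using one by simp
  finally have eq: "hconcat (1\<^sub>m k) M * A' = Y * (1\<^sub>m k + s \<cdot>\<^sub>m A1)" .
  have "det Y * det B = 1" using det_mult[OF Y B] YB by simp
  hence "det Y \<noteq> 0" by auto
  hence "det (hconcat (1\<^sub>m k) M * A') \<noteq> 0"
    unfolding eq using det_mult[OF Y, of "1\<^sub>m k + s \<cdot>\<^sub>m A1"] dE A1 by simp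
  thus ?thesis using M unfolding A'_def by blast
qed



lemma finite_carrier_mat: "finite (carrier_mat n k :: ('a::finite) mat set)"
proof -
  let ?S = "({0..<n} \<times> {0..<k}) \<rightarrow>\<^sub>E (UNIV :: 'a set)"
  have "carrier_mat n k \<subseteq> (\<lambda>f. mat n k f) ` ?S"
  proof
    fix A :: "'a mat" assume A: "A \<in> carrier_mat n k"
    define f where "f = restrict (\<lambda>p. A $$ p) ({0..<n} \<times> {0..<k})"
    have fS: "f \<in> ?S" unfolding f_def by (rule restrict_PiE_iff[THEN iffD2]) simp
    have "mat n k f = A"
    proof (rule eq_matI)
      fix i j assume "i < dim_row A" "j < dim_col A"
      hence ij: "i < n" "j < k" using A by auto
      show "mat n k f $$ (i, j) = A $$ (i, j)" using ij unfolding f_def by simp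
    qed (use A in auto)
    thus "A \<in> (\<lambda>f. mat n k f) ` ?S" using fS by blast
  qed
  moreover have "finite ?S" by (rule finite_PiE) simp_all
  ultimately show ?thesis using finite_subset by blast
qed

definition eA :: "nat \<Rightarrow> nat \<Rightarrow> 'f::field mat \<Rightarrow> (nat \<Rightarrow> nat \<Rightarrow> 'f alg_closure) \<Rightarrow> nat \<Rightarrow> nat \<Rightarrow> 'f alg_closure" where
  "eA n k A v i j = (\<Sum>t\<in>{0..<n}. (if t < k then (if i = t then 1 else 0) else v i (t - k)) * to_ac (A $$ (t, j)))"

definition gA :: "nat \<Rightarrow> nat \<Rightarrow> 'f::field mat \<Rightarrow> (nat \<Rightarrow> nat \<Rightarrow> 'f alg_closure) \<Rightarrow> 'f alg_closure" where
  "gA n k A v = det (mat k k (\<lambda>(i,j). eA n k A v i j))"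

lemma gA_mem:
  fixes C :: "('b \<Rightarrow> 'f::field alg_closure) set"
  assumes C: "rclosed C"
    and cst: "\<And>t j. t < n \<Longrightarrow> j < k \<Longrightarrow> (\<lambda>_. to_ac (A $$ (t, j))) \<in> C"
    and vr: "\<And>i t. i < k \<Longrightarrow> t < n - k \<Longrightarrow> (\<lambda>x. vr x i t) \<in> C"
  shows "(\<lambda>x. gA n k A (vr x)) \<in> C"
  unfolding gA_def
proof (rule rclosed_det[OF C, of k "\<lambda>x i j. eA n k A (vr x) i j"])
  fix i j assume i: "i < k" and j: "j < k"
  have mult: "\<And>f g. f \<in> C \<Longrightarrow> g \<in> C \<Longrightarrow> (\<lambda>x. f x * g x) \<in> C"
    using C unfolding rclosed_def by blast
  show "(\<lambda>x. eA n k A (vr x) i j) \<in> C"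
    unfolding eA_def
  proof (rule rclosed_sum[OF C])
    fix t assume t: "t \<in> {0..<n}"
    have h: "(\<lambda>x. if t < k then (if i = t then 1 else 0) else vr x i (t - k)) \<in> C"
    proof (cases "t < k")
      case True then show ?thesis using C by (auto simp: rclosed_def)
    next
      case False then show ?thesis using vr[OF i, of "t - k"] t by auto
    qed
    show "(\<lambda>x. (if t < k then (if i = t then 1 else 0) else vr x i (t - k)) * to_ac (A $$ (t, j))) \<in> C"
      by (rule mult[OF h cst]) (use t j in auto)
  qed simp
qed

lemma gA_eq:
  fixes A :: "'f::field mat"
  assumes M: "M \<in> carrier_mat k (n - k)" and A: "A \<in> carrier_mat n k" and kn: "k \<le> n"
  shows "det (hconcat (1\<^sub>m k) M * map_mat to_ac A) = gA n k A (\<lambda>i t. M $$ (i, t))"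
proof -
  have H: "hconcat (1\<^sub>m k) M \<in> carrier_mat k n" using M kn hconcat_carrier[of "1\<^sub>m k" k k M "n - k"] by simp
  have "hconcat (1\<^sub>m k) M * map_mat to_ac A = mat k k (\<lambda>(i,j). eA n k A (\<lambda>i t. M $$ (i, t)) i j)"
  proof (rule eq_matI)
    fix i j assume "i < dim_row (mat k k (\<lambda>(i,j). eA n k A (\<lambda>i t. M $$ (i, t)) i j))"
      "j < dim_col (mat k k (\<lambda>(i,j). eA n k A (\<lambda>i t. M $$ (i, t)) i j))"
    hence i: "i < k" and j: "j < k" by auto
    have "(hconcat (1\<^sub>m k) M * map_mat to_ac A) $$ (i,j) = row (hconcat (1\<^sub>m k) M) i \<bullet> col (map_mat to_ac A) j"
      using i j H A by (intro index_mult_mat) auto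
    also have "\<dots> = (\<Sum>t\<in>{0..<n}. hconcat (1\<^sub>m k) M $$ (i,t) * to_ac (A $$ (t,j)))"
      using i j H A unfolding scalar_prod_def by (intro sum.cong) auto
    also have "\<dots> = eA n k A (\<lambda>i t. M $$ (i, t)) i j"
      unfolding eA_def
    proof (rule sum.cong[OF refl])
      fix t assume t: "t \<in> {0..<n}"
      have "hconcat (1\<^sub>m k) M $$ (i,t) = (if t < k then (if i = t then 1 else 0) else M $$ (i, t - k))"
        using i t kn M unfolding hconcat_def by auto
      thus "hconcat (1\<^sub>m k) M $$ (i,t) * to_ac (A $$ (t,j)) =
        (if t < k then (if i = t then 1 else 0) else M $$ (i, t - k)) * to_ac (A $$ (t, j))" by simp
    qed
    finally show "(hconcat (1\<^sub>m k) M * map_mat to_ac A) $$ (i,j) = mat k k (\<lambda>(i,j). eA n k A (\<lambda>i t. M $$ (i, t)) i j) $$ (i,j)"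
      using i j by simp
  qed (use H A in auto)
  thus ?thesis unfolding gA_def by simp
qed

definition mkm :: "nat \<Rightarrow> nat \<Rightarrow> (nat \<Rightarrow> 'a) \<Rightarrow> 'a mat" where
  "mkm k l x = mat k l (\<lambda>(i,j). x (i * l + j))"

lemma gA_mkm: "gA n k A (\<lambda>i t. mkm k (n - k) x $$ (i, t)) = gA n k A (\<lambda>i t. x (i * (n - k) + t))"
  unfolding gA_def
proof (rule arg_cong[of _ _ det], rule eq_matI)
  fix i j assume ij: "i < dim_row (mat k k (\<lambda>(i, j). eA n k A (\<lambda>i t. x (i * (n - k) + t)) i j))"
    "j < dim_col (mat k k (\<lambda>(i, j). eA n k A (\<lambda>i t. x (i * (n - k) + t)) i j))"
  hence i: "i < k" and j: "j < k" by auto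
  show "mat k k (\<lambda>(i, j). eA n k A (\<lambda>i t. mkm k (n - k) x $$ (i, t)) i j) $$ (i, j) =
        mat k k (\<lambda>(i, j). eA n k A (\<lambda>i t. x (i * (n - k) + t)) i j) $$ (i, j)"
  proof -
    have "eA n k A (\<lambda>i t. mkm k (n - k) x $$ (i, t)) i j = eA n k A (\<lambda>i t. x (i * (n - k) + t)) i j"
      unfolding eA_def
    proof (rule sum.cong[OF refl])
      fix t assume t: "t \<in> {0..<n}"
      show "(if t < k then (if i = t then 1 else 0) else mkm k (n - k) x $$ (i, t - k)) * to_ac (A $$ (t, j)) =
            (if t < k then (if i = t then 1 else 0) else x (i * (n - k) + (t - k))) * to_ac (A $$ (t, j))"
      proof (cases "t < k")
        case False
        hence "t - k < n - k" using t by auto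
        thus ?thesis using False i unfolding mkm_def by simp
      qed simp
    qed
    thus ?thesis using i j by simp
  qed
qed auto

theorem theorem3p1:
  fixes Fq :: "'f::{field, finite} set" and q m n k :: nat
  assumes "prime_power q" and "m \<ge> 1"
    and "card (UNIV :: 'f set) = q ^ m"
    and sub: "is_subfield Fq" and "card Fq = q"
    and "1 \<le> k" and k1: "k \<le> n - 1"
  shows "generic Fq k (n - k) (S_MRD Fq n k)"
proof -
  have kn: "k \<le> n" and l0: "n - k > 0" using k1 \<open>1 \<le> k\<close> by auto
  define As where "As = {A \<in> carrier_mat n k. (\<forall>i<n. \<forall>j<k. A $$ (i, j) \<in> Fq) \<and> vec_space.rank n A = k}"
  have finAs: "finite As" unfolding As_def using finite_carrier_mat[of n k] by (rule rev_finite_subset) auto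
  define P where "P = (\<lambda>M. \<Prod>A\<in>As. gA n k A (\<lambda>i t. M $$ (i, t)))"
  have Pmem: "P \<in> polyfun Fq k (n - k)"
    unfolding P_def
  proof (rule rclosed_prod[OF rclosed_polyfun[OF sub] finAs])
    fix A assume "A \<in> As"
    hence AF: "\<And>t j. t < n \<Longrightarrow> j < k \<Longrightarrow> A $$ (t, j) \<in> Fq" unfolding As_def by auto
    show "(\<lambda>M. gA n k A (\<lambda>i t. M $$ (i, t))) \<in> polyfun Fq k (n - k)"
      by (rule gA_mem[OF rclosed_polyfun[OF sub]]) (auto intro: polyfun.intros AF)
  qed
  define U where "U = carrier_mat k (n - k) - {M \<in> carrier_mat k (n - k). \<forall>f\<in>{P}. f M = 0}"
  have zo: "zariski_open Fq k (n - k) U"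
    unfolding zariski_open_def U_def using Pmem by (intro exI[of _ "{P}"]) auto
  have sub_S: "U \<subseteq> S_MRD Fq n k"
  proof
    fix M assume "M \<in> U"
    hence M: "M \<in> carrier_mat k (n - k)" and PM: "P M \<noteq> 0" unfolding U_def by auto
    show "M \<in> S_MRD Fq n k" unfolding S_MRD_def
    proof (intro CollectI conjI M ballI impI)
      fix A assume A: "A \<in> carrier_mat n k" and AF: "\<forall>i<n. \<forall>j<k. A $$ (i, j) \<in> Fq"
        and r: "vec_space.rank n A = k"
      have "A \<in> As" unfolding As_def using A AF r by auto
      hence "gA n k A (\<lambda>i t. M $$ (i, t)) \<noteq> 0" using PM prod_zero_iff[OF finAs] unfolding P_def by blast
      thus "det (hconcat (1\<^sub>m k) M * map_mat to_ac A) \<noteq> 0" using gA_eq[OF M A kn] by simp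
    qed
  qed
  define \<phi> :: "'f mat \<Rightarrow> (nat \<Rightarrow> 'f alg_closure) \<Rightarrow> 'f alg_closure" where "\<phi> = (\<lambda>A x. gA n k A (\<lambda>i t. x (i * (n - k) + t)))"
  have "\<exists>x. \<forall>f\<in>\<phi> ` As. f x \<noteq> 0"
  proof (rule pf_SZ[OF infinite_field_ac])
    show "finite (\<phi> ` As)" using finAs by simp
    show "\<phi> ` As \<subseteq> pf (k * (n - k))"
    proof
      fix f assume "f \<in> \<phi> ` As"
      then obtain A where f: "f = \<phi> A" by auto
      have "(\<lambda>x. gA n k A (\<lambda>i t. x (i * (n - k) + t))) \<in> pf (k * (n - k))"
      proof (rule gA_mem[OF rclosed_pf])
        fix i t assume i: "i < k" and t: "t < n - k"
        have "i * (n - k) + t < k * (n - k)"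
        proof -
          have "i * (n - k) + t < (i + 1) * (n - k)" using t by simp
          also have "\<dots> \<le> k * (n - k)" using i by (intro mult_right_mono) auto
          finally show ?thesis .
        qed
        thus "(\<lambda>x. x (i * (n - k) + t)) \<in> pf (k * (n - k))" by (rule pf.var)
      qed (rule pf.const)
      thus "f \<in> pf (k * (n - k))" unfolding f \<phi>_def .
    qed
    show "\<forall>f\<in>\<phi> ` As. \<exists>x. f x \<noteq> 0"
    proof
      fix f assume "f \<in> \<phi> ` As"
      then obtain A where f: "f = \<phi> A" and AAs: "A \<in> As" by auto
      hence A: "A \<in> carrier_mat n k" and r: "vec_space.rank n A = k" unfolding As_def by auto
      have inj: "\<And>v. v \<in> carrier_vec k \<Longrightarrow> A *\<^sub>v v = 0\<^sub>v n \<Longrightarrow> v = 0\<^sub>v k"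
        using vec_space.rank_inj[OF A r] by blast
      obtain M where M: "M \<in> carrier_mat k (n - k)" and dM: "det (hconcat (1\<^sub>m k) M * map_mat to_ac A) \<noteq> 0"
        using exists_good_M[OF A kn inj] by blast
      define x where "x = (\<lambda>v. M $$ (v div (n - k), v mod (n - k)))"
      have "mkm k (n - k) x = M"
      proof (rule eq_matI)
        fix i j assume "i < dim_row M" "j < dim_col M"
        hence i: "i < k" and j: "j < n - k" using M by auto
        have "(i * (n - k) + j) div (n - k) = i" "(i * (n - k) + j) mod (n - k) = j"
          using j by (simp_all add: div_mult_self3 mod_mult_self3)
        thus "mkm k (n - k) x $$ (i, j) = M $$ (i, j)" unfolding mkm_def x_def using i j by simp
      qed (use M in \<open>auto simp: mkm_def\<close>)
      hence "f x = gA n k A (\<lambda>i t. M $$ (i, t))"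
        unfolding f \<phi>_def using gA_mkm[of n k A x] by simp
      thus "\<exists>x. f x \<noteq> 0" using dM gA_eq[OF M A kn] by (intro exI[of _ x]) simp
    qed
  qed
  then obtain x where x: "\<And>A. A \<in> As \<Longrightarrow> \<phi> A x \<noteq> 0" by auto
  define M where "M = mkm k (n - k) x"
  have M: "M \<in> carrier_mat k (n - k)" unfolding M_def mkm_def by simp
  have "\<forall>A\<in>As. gA n k A (\<lambda>i t. M $$ (i, t)) \<noteq> 0"
  proof
    fix A assume "A \<in> As"
    have "gA n k A (\<lambda>i t. M $$ (i, t)) = \<phi> A x" unfolding M_def \<phi>_def by (rule gA_mkm)
    thus "gA n k A (\<lambda>i t. M $$ (i, t)) \<noteq> 0" using x[OF \<open>A \<in> As\<close>] by simp
  qed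
  hence PM: "P M \<noteq> 0" unfolding P_def using finAs by simp
  have "M \<in> U" unfolding U_def using M PM by simp
  show ?thesis unfolding generic_def
    by (rule exI[of _ U], intro conjI) (use zo sub_S \<open>M \<in> U\<close> in auto)
qed

end
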